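(* For any real numbers $t\ge1$ and $\varepsilon>0$, there exist an (indivisible-goods) instance, a $t$-cohesive group $N^*$, and an allocation $A$ that GreedyEJR-M can output on this instance (for some admissible choice of the pairs selected in Step 2) such that the average satisfaction of $N^*$ with respect to $A$ is at most $\lfloor t\rfloor\cdot\left(1-\frac{\lfloor t\rfloor+1}{2t}\right)+\varepsilon$.
   Context: Model: There is a set of agents $N=\{1,\dots,n\}$. The resource $R$ consists of a cake $C=[0,c]$ for a real $c\ge 0$ and a set of indivisible goods $G=\{g_1,\dots,g_m\}$ for an integer $m\ge 0$, with $\max(c,m)>0$. A piece of cake is a union of finitely many disjoint closed subintervals of $C$; its length $\ell(\cdot)$ is the sum of the lengths of its intervals. A bundle $R'=(C',G')$ consists of a piece of cake $C'\subseteq C$ and a set $G'\subseteq G$; its size is $s(R')=\ell(C')+|G'|$. Each agent $i$ approves a bundle $R_i=(C_i,G_i)$, and her utility for a bundle $R'$ is $u_i(R')=\ell(C_i\cap C')+|G_i\cap G'|$. A parameter $\alpha\in(0,c+m]$ is given; an allocation is a bundle $A$ with $s(A)\le\alpha$. An indivisible-goods instance is one with $c=0$. For a real $t\ge 0$, $N^*\subseteq N$ is $t$-cohesive if $|N^*|\ge t n/\alpha$ and $s(\bigcap_{i\in N^*}R_i)\ge t$. GreedyEJR-M rule: Step 1: set $N'=N$, $R'=\emptyset$. Step 2: let $t^*$ be the largest nonnegative real for which there exist a nonempty $N^*\subseteq N'$ and a bundle $R^*\subseteq R$ such that $N^*$ is $t^*$-cohesive, $R^*\subseteq R_i$ for all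 $i\in N^*$, and $s(R^* )=t^*$; take any such pair $(N^*,R^* )$, remove $N^*$ from $N'$, and add to $R'$ the part of $R^*$ not already in $R'$. Step 3: if $N'=\emptyset$ return $R'$; otherwise go to Step 2. The average satisfaction of a group $N'\subseteq N$ with respect to $A$ is $\frac1{|N'|}\sum_{i\in N'}u_i(A)$. *)

theory Defs
  imports Complex_Main
begin

text \<open>With c = 0 every piece of cake has length 0, so bundles reduce to sets of goods
  and the size of a bundle is its cardinality.\<close>

definition valid_instance :: "nat \<Rightarrow> nat \<Rightarrow> (nat \<Rightarrow> nat set) \<Rightarrow> real \<Rightarrow> bool" where
  "valid_instance n m R \<alpha> \<longleftrightarrow>
     0 < n \<and> 0 < m \<and> (\<forall>i<n. R i \<subseteq> {..<m}) \<and> 0 < \<alpha> \<and> \<alpha> \<le> real m"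

text \<open>S is t-cohesive: |S| \<ge> t n / alpha and the common approved bundle has size \<ge> t
  (the intersection over the empty family is the whole resource).\<close>
definition cohesive :: "nat \<Rightarrow> nat \<Rightarrow> (nat \<Rightarrow> nat set) \<Rightarrow> real \<Rightarrow> real \<Rightarrow> nat set \<Rightarrow> bool" where
  "cohesive n m R \<alpha> t S \<longleftrightarrow>
     S \<subseteq> {..<n} \<and> real (card S) \<ge> t * real n / \<alpha> \<and>
     real (card ({..<m} \<inter> (\<Inter>i\<in>S. R i))) \<ge> t"

definition feasible_pair :: "nat \<Rightarrow> nat \<Rightarrow> (nat \<Rightarrow> nat set) \<Rightarrow> real \<Rightarrow> nat set \<Rightarrow> nat set \<Rightarrow> nat set \<Rightarrow> bool" where
  "feasible_pair n m R \<alpha> Nr S B \<longleftrightarrow>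
     S \<noteq> {} \<and> S \<subseteq> Nr \<and> B \<subseteq> {..<m} \<and> (\<forall>i\<in>S. B \<subseteq> R i) \<and>
     cohesive n m R \<alpha> (real (card B)) S"

definition greedy_choice :: "nat \<Rightarrow> nat \<Rightarrow> (nat \<Rightarrow> nat set) \<Rightarrow> real \<Rightarrow> nat set \<Rightarrow> nat set \<Rightarrow> nat set \<Rightarrow> bool" where
  "greedy_choice n m R \<alpha> Nr S B \<longleftrightarrow>
     feasible_pair n m R \<alpha> Nr S B \<and>
     (\<forall>S' B'. feasible_pair n m R \<alpha> Nr S' B' \<longrightarrow> card B' \<le> card B)"

inductive greedy_run :: "nat \<Rightarrow> nat \<Rightarrow> (nat \<Rightarrow> nat set) \<Rightarrow> real \<Rightarrow> nat set \<Rightarrow> nat set \<Rightarrow> nat set \<Rightarrow> bool"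
  for n m R \<alpha> where
  run_done: "greedy_run n m R \<alpha> {} Rc Rc"
| run_step: "\<lbrakk> Nr \<noteq> {}; greedy_choice n m R \<alpha> Nr S B;
           greedy_run n m R \<alpha> (Nr - S) (Rc \<union> B) A \<rbrakk>
         \<Longrightarrow> greedy_run n m R \<alpha> Nr Rc A"

definition greedy_output :: "nat \<Rightarrow> nat \<Rightarrow> (nat \<Rightarrow> nat set) \<Rightarrow> real \<Rightarrow> nat set \<Rightarrow> bool" where
  "greedy_output n m R \<alpha> A \<longleftrightarrow> greedy_run n m R \<alpha> {..<n} {} A"

definition avg_satisfaction :: "(nat \<Rightarrow> nat set) \<Rightarrow> nat set \<Rightarrow> nat set \<Rightarrow> real" where
  "avg_satisfaction R S A = (\<Sum>i\<in>S. real (card (R i \<inter> A))) / real (card S)"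

end

theory Submission
  imports Defs
begin

lemma block_sum:
  fixes q a r :: nat
  assumes "r \<le> q"
  shows "(\<Sum>j\<in>{a*q..<a*q+r}. j div q) = a * r"
proof -
  have "(\<Sum>j\<in>{a*q..<a*q+r}. j div q) = (\<Sum>j\<in>{a*q..<a*q+r}. a)"
  proof (rule sum.cong)
    fix j assume "j \<in> {a*q..<a*q+r}"
    then have "q * a \<le> j" "j < q * Suc a" using assms by (auto simp: algebra_simps)
    then show "j div q = a" by (rule div_nat_eqI)
  qed simp
  then show ?thesis by simp
qed

lemma full_sum:
  fixes q k :: nat
  shows "2 * (\<Sum>j<k*q. j div q) + q*k = q*k*k"
proof (induction k)
  case 0 then show ?case by simp
next
  case (Suc k)
  have "(\<Sum>j<Suc k*q. j div q) = (\<Sum>j\<in>{0..<k*q}. j div q) + (\<Sum>j\<in>{k*q..<k*q+q}. j div q)"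
    by (subst sum.atLeastLessThan_concat) (auto simp: atLeast0LessThan algebra_simps)
  also have "\<dots> = (\<Sum>j<k*q. j div q) + k*q"
    using block_sum[of q q k] by (simp add: atLeast0LessThan)
  finally show ?case using Suc.IH by (simp add: algebra_simps)
qed

lemma part_sum:
  fixes q k r :: nat
  assumes "r \<le> q"
  shows "2 * (\<Sum>j<k*q+r. j div q) + q*k = q*k*k + 2*k*r"
proof -
  have "(\<Sum>j<k*q+r. j div q) = (\<Sum>j\<in>{0..<k*q}. j div q) + (\<Sum>j\<in>{k*q..<k*q+r}. j div q)"
    by (subst sum.atLeastLessThan_concat) (auto simp: atLeast0LessThan)
  also have "\<dots> = (\<Sum>j<k*q. j div q) + k*r"
    using block_sum[of r q k] assms by (simp add: atLeast0LessThan)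
  finally show ?thesis using full_sum[of q k] by (simp add: algebra_simps)
qed

lemma ineq:
  fixes t e X S Q K :: real
  assumes t1: "t \<ge> 1" and K1: "K \<ge> 1" and Kt: "K \<le> t" and e: "e > 0" and Qe: "Q*e \<ge> 2"
    and S1: "t*Q \<le> S" and S2: "S < t*Q+1" and X: "2*X = K*(2*S+2-Q*(K+1))"
  shows "X/S \<le> K*(1-(K+1)/(2*t)) + e"
proof -
  have Q0: "Q > 0" proof (rule ccontr)
    assume "\<not> Q > 0" then have "Q*e \<le> 0" using e by (simp add: mult_nonpos_nonneg)
    then show False using Qe by simp
  qed
  have S0: "S > 0" using S1 t1 Q0 by (smt (verit) mult_pos_pos)
  have h1: "2*X*t - S*K*(2*t-K-1) = 2*K*t + K*(K+1)*(S - t*Q)"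
  proof -
    have "2*X*t = K*(2*S+2-Q*(K+1))*t" using X by simp
    then show ?thesis by (simp add: algebra_simps)
  qed
  have h2: "K*(K+1)*(S - t*Q) \<le> K*(K+1)"
    using S2 K1 by (intro mult_left_le) auto
  have h3: "K*(K+1) \<le> t*(2*t)" using K1 Kt t1 by (intro mult_mono) auto
  have h4: "2*K*t \<le> 2*t*t" using Kt t1 K1 by (intro mult_mono) auto
  have h5: "S*t*e \<ge> t*Q*t*e" using S1 t1 e by (intro mult_right_mono) auto
  have h6: "t*Q*t*e = t*t*(Q*e)" by (simp add: algebra_simps)
  have h7: "t*t*(Q*e) \<ge> t*t*2" using Qe t1 by (intro mult_left_mono) auto
  have main: "2*X*t \<le> S*K*(2*t-K-1) + 2*S*t*e"
    using h1 h2 h3 h4 h5 h6 h7 by (simp add: algebra_simps) 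
  have "X/S \<le> (S*K*(2*t-K-1)/(2*t) + S*e)/S"
  proof (rule divide_right_mono)
    show "X \<le> S*K*(2*t-K-1)/(2*t) + S*e"
      using main t1 by (simp add: field_simps)
  qed (use S0 in simp)
  also have "\<dots> = K*(1-(K+1)/(2*t)) + e"
    using S0 t1 by (simp add: field_simps)
  finally show ?thesis .
qed

locale C =
  fixes k q s :: nat
  assumes k1: "1 \<le> k" and q1: "1 \<le> q" and sk: "k*q \<le> s" and sq: "s + 1 \<le> (k+1)*q"
begin

definition "nn = s + k*k*q"
definition "lev i = (if i < s then (i+1) div q else (i-s) div (k*q) + 1)"
definition "RR i = {..<lev i} \<union> (if i < s then {k..2*k} else {})"
definition "mm = nn + 2*k + 1"
definition "al = real nn / real q"
definition "Nr l = {i. i < nn \<and> lev i \<le> l}"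

lemma nn_pos: "0 < nn" using k1 q1 by (simp add: nn_def)

lemma lev_le: "i < nn \<Longrightarrow> lev i \<le> k"
proof -
  assume i: "i < nn"
  show ?thesis
  proof (cases "i < s")
    case True
    then have "i + 1 < (k+1)*q" using sq by simp
    then have "(i+1) div q < k+1" by (rule less_mult_imp_div_less)
    then show ?thesis using True by (simp add: lev_def)
  next
    case False
    then have "i - s < k * (k*q)" using i by (simp add: nn_def)
    then have "(i-s) div (k*q) < k" by (rule less_mult_imp_div_less)
    then show ?thesis using False by (simp add: lev_def)
  qed
qed

lemma nq: "real nn / al = real q"
  using nn_pos q1 by (simp add: al_def)

lemma coh_card:
  assumes "cohesive nn mm RR al (real (card B)) S'"
  shows "card B * q \<le> card S'"
proof -
  have "real (card B) * real nn / al \<le> real (card S')"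
    using assms by (simp add: cohesive_def)
  then have "real (card B) * real q \<le> real (card S')"
    using nq by (metis times_divide_eq_right)
  then show ?thesis by (metis of_nat_le_iff of_nat_mult)
qed

lemma max_bound:
  assumes "feasible_pair nn mm RR al (Nr l) S' B'"
  shows "card B' \<le> l"
proof -
  have sub: "S' \<subseteq> Nr l" and app: "\<forall>i\<in>S'. B' \<subseteq> RR i"
    and coh: "cohesive nn mm RR al (real (card B')) S'"
    using assms by (auto simp: feasible_pair_def)
  have cB: "card B' * q \<le> card S'" using coh_card[OF coh] .
  show ?thesis
  proof (cases "\<exists>i\<in>S'. s \<le> i")
    case True
    then obtain i where i: "i \<in> S'" "s \<le> i" by blast
    then have "lev i \<le> l" using sub by (auto simp: Nr_def)
    moreover have "B' \<subseteq> RR i" using app i by blast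
    then have "B' \<subseteq> {..<lev i}" using i by (simp add: RR_def)
    then have "card B' \<le> lev i" by (metis card_lessThan card_mono finite_lessThan)
    ultimately show ?thesis by simp
  next
    case False
    have "S' \<subseteq> {..<(l+1)*q - 1}"
    proof
      fix i assume i: "i \<in> S'"
      then have "i < s" using False by auto
      moreover have "lev i \<le> l" using i sub by (auto simp: Nr_def)
      ultimately have "(i+1) div q < l + 1" by (simp add: lev_def)
      then have "i + 1 < (l+1) * q" using q1 div_less_iff_less_mult by auto
      then show "i \<in> {..<(l+1)*q - 1}" by simp
    qed
    then have "card S' \<le> (l+1)*q - 1" by (metis card_lessThan card_mono finite_lessThan)
    moreover have "(l+1)*q \<ge> 1" using q1 by simp
    ultimately have "card B' * q < (l+1) * q" using cB by linarith
    then have "card B' < l + 1" by (metis mult_less_cancel2)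
    then show ?thesis by simp
  qed
qed


lemma G_card:
  assumes "Suc l \<le> k"
  shows "Suc l * q \<le> card {i. i < nn \<and> lev i = Suc l}"
proof -
  let ?O = "(\<lambda>j. s + j) ` {l*(k*q)..<Suc l*(k*q)}"
  have "?O \<subseteq> {i. i < nn \<and> lev i = Suc l}"
  proof
    fix i assume "i \<in> ?O"
    then obtain j where j0: "j \<in> {l*(k*q)..<Suc l*(k*q)}" "i = s + j" by blast
    then have j: "i = s + j" "l*(k*q) \<le> j" "j < Suc l*(k*q)" by auto
    have "Suc l * (k*q) \<le> k * (k*q)" using assms by (rule mult_le_mono1)
    then have "i < nn" using j by (simp add: nn_def)
    moreover have "j div (k*q) = l" using j by (intro div_nat_eqI) (auto simp: algebra_simps)
    ultimately show "i \<in> {i. i < nn \<and> lev i = Suc l}" using j by (simp add: lev_def)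
  qed
  moreover have "card ?O = k*q" by (simp add: card_image)
  moreover have "finite {i. i < nn \<and> lev i = Suc l}" by simp
  ultimately have "k*q \<le> card {i. i < nn \<and> lev i = Suc l}" by (metis card_mono)
  moreover have "Suc l * q \<le> k * q" using assms by (rule mult_le_mono1)
  ultimately show ?thesis by linarith
qed

lemma run:
  "l \<le> k \<Longrightarrow> Rc \<union> {..<l} = {..<k} \<Longrightarrow> greedy_run nn mm RR al (Nr l) Rc {..<k}"
proof (induction l arbitrary: Rc)
  case 0
  then have Rc: "Rc = {..<k}" by simp
  show ?case
  proof (cases "Nr 0 = {}")
    case True
    then show ?thesis using Rc by (simp add: greedy_run.run_done)
  next
    case False
    have fp: "feasible_pair nn mm RR al (Nr 0) (Nr 0) {}"
      using False by (auto simp: feasible_pair_def cohesive_def Nr_def)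
    have "greedy_choice nn mm RR al (Nr 0) (Nr 0) {}"
      using fp max_bound[of 0] by (auto simp: greedy_choice_def)
    moreover have "greedy_run nn mm RR al (Nr 0 - Nr 0) (Rc \<union> {}) {..<k}"
      using Rc by (simp add: greedy_run.run_done)
    ultimately show ?thesis using False by (metis greedy_run.run_step)
  qed
next
  case (Suc l)
  let ?G = "{i. i < nn \<and> lev i = Suc l}"
  have cG: "Suc l * q \<le> card ?G" using G_card Suc.prems by blast
  then have Gne: "?G \<noteq> {}" using q1 by (metis card.empty le_zero_eq mult_is_0 not_one_le_zero zero_less_Suc neq0_conv)
  have GN: "?G \<subseteq> Nr (Suc l)" by (auto simp: Nr_def)
  have appr: "\<forall>i\<in>?G. {..<Suc l} \<subseteq> RR i" by (auto simp: RR_def)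
  have "{..<Suc l} \<subseteq> {..<mm}" using Suc.prems by (auto simp: mm_def)
  have sub2: "{..<Suc l} \<subseteq> {..<mm} \<inter> (\<Inter>i\<in>?G. RR i)" using appr \<open>{..<Suc l} \<subseteq> {..<mm}\<close> by (simp add: subset_iff)
  have "card {..<Suc l} \<le> card ({..<mm} \<inter> (\<Inter>i\<in>?G. RR i))"
    by (rule card_mono[OF _ sub2]) simp
  then have c2: "real (Suc l) \<le> real (card ({..<mm} \<inter> (\<Inter>i\<in>?G. RR i)))" by simp
  have "real (Suc l) * real nn / al = real (Suc l) * real q" using nq by (metis times_divide_eq_right)
  also have "\<dots> \<le> real (card ?G)" using cG by (metis of_nat_le_iff of_nat_mult)
  finally have c1: "real (Suc l) * real nn / al \<le> real (card ?G)" .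
  have fp: "feasible_pair nn mm RR al (Nr (Suc l)) ?G {..<Suc l}"
    unfolding feasible_pair_def cohesive_def
    using Gne GN appr \<open>{..<Suc l} \<subseteq> {..<mm}\<close> c1 c2 by auto
  have gc: "greedy_choice nn mm RR al (Nr (Suc l)) ?G {..<Suc l}"
    using fp max_bound[of "Suc l"] by (auto simp: greedy_choice_def)
  have eq1: "Nr (Suc l) - ?G = Nr l" by (auto simp: Nr_def)
  have eq2: "Rc \<union> {..<Suc l} = {..<k}" using Suc.prems by simp
  have "greedy_run nn mm RR al (Nr l) {..<k} {..<k}"
  proof -
    have a: "l \<le> k" using Suc.prems by simp
    have b: "{..<k} \<union> {..<l} = {..<k}" using a by auto
    show ?thesis by (rule Suc.IH[OF a b])
  qed
  then have r: "greedy_run nn mm RR al (Nr (Suc l) - ?G) (Rc \<union> {..<Suc l}) {..<k}"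
    using eq1 eq2 by simp
  have ne: "Nr (Suc l) \<noteq> {}" using Gne GN by blast
  show ?case by (rule greedy_run.run_step[OF ne gc r])
qed

lemma outp: "greedy_output nn mm RR al {..<k}"
proof -
  have "Nr k = {..<nn}" using lev_le by (auto simp: Nr_def)
  then show ?thesis using run[of k "{}"] by (simp add: greedy_output_def)
qed

lemma satis: "(\<Sum>i\<in>{..<s}. real (card (RR i \<inter> {..<k}))) = real (\<Sum>j<s+1. j div q)"
proof -
  have "(\<Sum>i\<in>{..<s}. real (card (RR i \<inter> {..<k}))) = (\<Sum>i<s. real ((i+1) div q))"
  proof (rule sum.cong)
    fix i assume i: "i \<in> {..<s}"
    then have "i < nn" by (simp add: nn_def)
    then have "lev i \<le> k" by (rule lev_le)
    then have "RR i \<inter> {..<k} = {..<lev i}" using i by (auto simp: RR_def)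
    then show "real (card (RR i \<inter> {..<k})) = real ((i+1) div q)" using i by (simp add: lev_def)
  qed simp
  also have "\<dots> = real (\<Sum>i<s. (i+1) div q)" by simp
  also have "(\<Sum>i<s. (i+1) div q) = (\<Sum>j<s+1. j div q)"
    by (simp add: sum.lessThan_Suc_shift del: sum.lessThan_Suc)
  finally show ?thesis .
qed

lemma sum2: "2 * (\<Sum>j<s+1. j div q) + q*k = q*k*k + 2*k*(s+1-k*q)"
proof -
  have "s + 1 = k*q + (s+1-k*q)" using sk by simp
  moreover have "s+1-k*q \<le> q" using sq by (simp add: algebra_simps)
  ultimately show ?thesis using part_sum[of "s+1-k*q" q k] by metis
qed


lemma valid: "valid_instance nn mm RR al"
proof -
  have "\<forall>i<nn. RR i \<subseteq> {..<mm}"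
  proof (intro allI impI)
    fix i assume "i < nn"
    then have "lev i \<le> k" by (rule lev_le)
    then show "RR i \<subseteq> {..<mm}" by (auto simp: RR_def mm_def)
  qed
  moreover have "al \<le> real mm"
  proof -
    have "al \<le> real nn" using q1 nn_pos by (simp add: al_def divide_le_eq)
    then show ?thesis by (simp add: mm_def)
  qed
  moreover have "0 < al" using q1 nn_pos by (simp add: al_def)
  ultimately show ?thesis using nn_pos by (simp add: valid_instance_def mm_def)
qed

lemma cardA: "real (card {..<k}) \<le> al"
proof -
  have "k * q \<le> nn" using sk by (simp add: nn_def)
  then have "real k * real q \<le> real nn" by (metis of_nat_le_iff of_nat_mult)
  then show ?thesis using q1 by (simp add: al_def le_divide_eq)
qed

lemma coh:
  fixes t :: real
  assumes "t * real q \<le> real s" and "t \<le> real k + 1"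
  shows "cohesive nn mm RR al t {..<s}"
proof -
  have "t * real nn / al = t * real q" using nq by (metis times_divide_eq_right)
  moreover have "{k..2*k} \<subseteq> {..<mm} \<inter> (\<Inter>i\<in>{..<s}. RR i)" by (auto simp: RR_def mm_def)
  then have "card {k..2*k} \<le> card ({..<mm} \<inter> (\<Inter>i\<in>{..<s}. RR i))"
    by (intro card_mono) auto
  then have "real k + 1 \<le> real (card ({..<mm} \<inter> (\<Inter>i\<in>{..<s}. RR i)))" by simp
  ultimately show ?thesis using assms by (simp add: cohesive_def nn_def)
qed

lemma avg: "2 * avg_satisfaction RR {..<s} {..<k} * real s
   = real k * (2 * real s + 2 - real q * (real k + 1))"
proof -
  have "0 < k * q" using k1 q1 by simp
  then have "0 < s" using sk by linarith
  then have s0: "real s > 0" by simp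
  have e: "2 * real (\<Sum>j<s+1. j div q) + real q * real k = real q * real k * real k + 2 * real k * (real s + 1 - real k * real q)"
  proof -
    have "real (2 * (\<Sum>j<s+1. j div q) + q*k) = real (q*k*k + 2*k*(s+1-k*q))" using sum2 by simp
    moreover have "real (s+1-k*q) = real s + 1 - real k * real q" using sk by (simp add: of_nat_diff)
    ultimately show ?thesis by simp
  qed
  have "2 * avg_satisfaction RR {..<s} {..<k} * real s = 2 * real (\<Sum>j<s+1. j div q)"
    using s0 satis by (simp add: avg_satisfaction_def)
  also have "\<dots> = real k * (2 * real s + 2 - real q * (real k + 1))" using e by (simp add: algebra_simps)
  finally show ?thesis .
qed

end

theorem mainTheorem18:
  fixes t \<epsilon> :: real
  assumes "t \<ge> 1" and "\<epsilon> > 0"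
  shows "\<exists>n m R \<alpha> S A.
           valid_instance n m R \<alpha> \<and>
           cohesive n m R \<alpha> t S \<and>
           greedy_output n m R \<alpha> A \<and> real (card A) \<le> \<alpha> \<and>
           avg_satisfaction R S A
             \<le> of_int \<lfloor>t\<rfloor> * (1 - (of_int \<lfloor>t\<rfloor> + 1) / (2 * t)) + \<epsilon>"
proof -
  define k where "k = nat \<lfloor>t\<rfloor>"
  have fl: "of_int \<lfloor>t\<rfloor> = real k" using assms(1) by (simp add: k_def)
  have kt: "real k \<le> t" using fl by (metis of_int_floor_le)
  have tk: "t < real k + 1" using fl by (metis floor_correct of_int_1 of_int_add)
  have k1: "1 \<le> k" using assms(1) by (simp add: k_def le_nat_iff)
  define D where "D = max (2/\<epsilon>) (1/(real k + 1 - t))"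
  define q where "q = nat \<lceil>D\<rceil> + 1"
  have qD: "D < real q"
  proof -
    have "D \<le> real (nat \<lceil>D\<rceil>)" by (rule real_nat_ceiling_ge)
    then show ?thesis by (simp add: q_def)
  qed
  have q1: "1 \<le> q" by (simp add: q_def)
  have Qe: "real q * \<epsilon> \<ge> 2"
  proof -
    have "2/\<epsilon> < real q" using qD by (simp add: D_def)
    then show ?thesis using assms(2) by (simp add: divide_less_eq)
  qed
  have Qt: "real q * (real k + 1 - t) > 1"
  proof -
    have "1/(real k + 1 - t) < real q" using qD by (simp add: D_def)
    then show ?thesis using tk by (simp add: divide_less_eq mult.commute)
  qed
  define s where "s = nat \<lceil>t * real q\<rceil>"
  have tq0: "t * real q \<ge> 0" using assms(1) by simp
  have s1: "t * real q \<le> real s" unfolding s_def using tq0 by (simp add: real_nat_ceiling_ge)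
  have s2: "real s < t * real q + 1"
  proof -
    have "real s = of_int \<lceil>t * real q\<rceil>" using tq0 by (simp add: s_def)
    moreover have "of_int \<lceil>t * real q\<rceil> - 1 < t * real q" by (rule ceiling_correct[THEN conjunct1])
    ultimately show ?thesis by simp
  qed
  have sk: "k*q \<le> s"
  proof -
    have "real k * real q \<le> t * real q" using kt by (intro mult_right_mono) auto
    then have "real (k*q) \<le> real s" using s1 by simp
    then show ?thesis by (simp only: of_nat_le_iff)
  qed
  have sq: "s + 1 \<le> (k+1)*q"
  proof -
    have "real s < real ((k+1)*q)" using s2 Qt by (simp add: algebra_simps)
    then show ?thesis by (simp only: of_nat_less_iff)
  qed
  interpret C k q s using k1 q1 sk sq by unfold_locales
  have av: "avg_satisfaction RR {..<s} {..<k} \<le> real k * (1 - (real k + 1)/(2*t)) + \<epsilon>"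
  proof -
    have "0 < k * q" using k1 q1 by simp
    then have "0 < s" using sk by linarith
    then have s0: "real s > 0" by simp
    let ?X = "avg_satisfaction RR {..<s} {..<k} * real s"
    have "2 * ?X = real k * (2 * real s + 2 - real q * (real k + 1))" using avg by (simp add: mult.assoc)
    then have "?X / real s \<le> real k * (1 - (real k + 1)/(2*t)) + \<epsilon>"
      using ineq[of t "real k" \<epsilon> "real q" "real s" ?X] assms k1 kt Qe s1 s2 by simp
    then show ?thesis using s0 by simp
  qed
  show ?thesis
    apply (rule exI[of _ nn], rule exI[of _ mm], rule exI[of _ RR], rule exI[of _ al],
           rule exI[of _ "{..<s}"], rule exI[of _ "{..<k}"])
    using valid coh[OF s1] tk outp cardA av fl by simp
qed

end
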